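(* Let $S_X,S_Y$ be finite nonempty action sets and $\varphi:S_X\times S_Y\to\mathbb{R}$. The following are equivalent: (a) $\varphi\equiv0$ is enforceable; (b) $\Phi_X^+\neq\emptyset$ and $\Phi_X^-\neq\emptyset$; (c) $0\in J(\varphi)$, where $$J(\varphi)=\Big[\min_{\tau_X\in\Delta(S_X)}\max_{s_Y\in S_Y}\varphi(\tau_X,s_Y),\ \max_{\tau_X\in\Delta(S_X)}\min_{s_Y\in S_Y}\varphi(\tau_X,s_Y)\Big]$$ (interpreted as the empty set if the left endpoint exceeds the right endpoint).
   Context: Two players $X,Y$ play a repeated game with finite action sets $S_X,S_Y$; $\Delta(S)$ denotes the probability distributions on $S$; $\varphi(\tau_X,s_Y)=\mathbb{E}_{s_X\sim\tau_X}[\varphi(s_X,s_Y)]$. Histories: $\mathcal{H}=\bigcup_{T\ge0}(S_X\times S_Y)^T$; behavioral strategies are maps $\sigma:\mathcal{H}\to\Delta(S)$; players independently draw actions each round from their strategies evaluated at the history of realized action pairs, with $\mathbb{E}_{\sigma_X,\sigma_Y}$ the expectation over the resulting play. For $\lambda\in[0,1)$, $\sigma_X$ is $(\varphi,\lambda)$-autocratic if for every behavioral strategy $\sigma_Y$, $\mathbb{E}_{\sigma_X,\sigma_Y}[(1-\lambda)\sum_{t\ge0}\lambda^t\varphi(s_X^t,s_Y^t)]=0$; it is $(\varphi,1)$-autocratic if for every $\sigma_Y$ the limit $\lim_{T\to\infty}\frac1{T+1}\sum_{t=0}^T\mathbb{E}_{\sigma_X,\sigma_Y}[\varphi(s_X^t,s_Y^t)]$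 exists and equals $0$. $\varphi\equiv0$ is enforceable if a $(\varphi,\lambda)$-autocratic behavioral strategy exists for some $\lambda\in[0,1]$. $\Phi_X^+=\{\tau_X\in\Delta(S_X):\min_{s_Y}\varphi(\tau_X,s_Y)\ge0\}$, $\Phi_X^-=\{\tau_X\in\Delta(S_X):\max_{s_Y}\varphi(\tau_X,s_Y)\le0\}$. *)

theory Defs
  imports "HOL-Analysis.Analysis"
begin

text \<open>Finite nonempty action sets are modelled by finite types 'x and 'y (types are nonempty).
  A mixed action is a probability vector on the (finite) action type.\<close>

definition is_dist :: "('a::finite \<Rightarrow> real) \<Rightarrow> bool" where
  "is_dist p \<longleftrightarrow> (\<forall>a. 0 \<le> p a) \<and> (\<Sum>a\<in>UNIV. p a) = 1"

definition Delta :: "('a::finite \<Rightarrow> real) set" where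
  "Delta = {p. is_dist p}"

text \<open>Histories: finite lists of realized action pairs, in chronological order.\<close>
type_synonym ('x, 'y) history = "('x \<times> 'y) list"

definition behavioral :: "(('x::finite, 'y::finite) history \<Rightarrow> ('a::finite \<Rightarrow> real)) \<Rightarrow> bool" where
  "behavioral \<sigma> \<longleftrightarrow> (\<forall>h. is_dist (\<sigma> h))"

definition hist_prob ::
  "(('x::finite, 'y::finite) history \<Rightarrow> 'x \<Rightarrow> real) \<Rightarrow> (('x, 'y) history \<Rightarrow> 'y \<Rightarrow> real)
   \<Rightarrow> ('x, 'y) history \<Rightarrow> real" where
  "hist_prob \<sigma>X \<sigma>Y h =
     (\<Prod>i<length h. \<sigma>X (take i h) (fst (h ! i)) * \<sigma>Y (take i h) (snd (h ! i)))"

definition stage_exp ::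
  "(('x::finite, 'y::finite) history \<Rightarrow> 'x \<Rightarrow> real) \<Rightarrow> (('x, 'y) history \<Rightarrow> 'y \<Rightarrow> real)
   \<Rightarrow> ('x \<Rightarrow> 'y \<Rightarrow> real) \<Rightarrow> nat \<Rightarrow> real" where
  "stage_exp \<sigma>X \<sigma>Y \<phi> t =
     (\<Sum>h\<in>{h. length h = t}. hist_prob \<sigma>X \<sigma>Y h *
        (\<Sum>a\<in>UNIV. \<Sum>b\<in>UNIV. \<sigma>X h a * \<sigma>Y h b * \<phi> a b))"

definition autocratic ::
  "(('x::finite, 'y::finite) history \<Rightarrow> 'x \<Rightarrow> real) \<Rightarrow> ('x \<Rightarrow> 'y \<Rightarrow> real) \<Rightarrow> real \<Rightarrow> bool" where
  "autocratic \<sigma>X \<phi> lam \<longleftrightarrow> behavioral \<sigma>X \<and>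
     (if lam < 1 then
        (\<forall>\<sigma>Y. behavioral \<sigma>Y \<longrightarrow> (1 - lam) * (\<Sum>t. lam ^ t * stage_exp \<sigma>X \<sigma>Y \<phi> t) = 0)
      else
        (\<forall>\<sigma>Y. behavioral \<sigma>Y \<longrightarrow>
           (\<lambda>T. (\<Sum>t\<le>T. stage_exp \<sigma>X \<sigma>Y \<phi> t) / real (T + 1)) \<longlonglongrightarrow> 0))"

definition enforceable :: "('x::finite \<Rightarrow> 'y::finite \<Rightarrow> real) \<Rightarrow> bool" where
  "enforceable \<phi> \<longleftrightarrow>
     (\<exists>lam\<in>{0..1}. \<exists>\<sigma>X :: ('x, 'y) history \<Rightarrow> 'x \<Rightarrow> real. autocratic \<sigma>X \<phi> lam)"

definition mixed_payoff :: "('x::finite \<Rightarrow> 'y \<Rightarrow> real) \<Rightarrow> ('x \<Rightarrow> real) \<Rightarrow> 'y \<Rightarrow> real" where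
  "mixed_payoff \<phi> \<tau> b = (\<Sum>a\<in>UNIV. \<tau> a * \<phi> a b)"

definition PhiX_plus :: "('x::finite \<Rightarrow> 'y::finite \<Rightarrow> real) \<Rightarrow> ('x \<Rightarrow> real) set" where
  "PhiX_plus \<phi> = {\<tau>\<in>Delta. Min (range (mixed_payoff \<phi> \<tau>)) \<ge> 0}"

definition PhiX_minus :: "('x::finite \<Rightarrow> 'y::finite \<Rightarrow> real) \<Rightarrow> ('x \<Rightarrow> real) set" where
  "PhiX_minus \<phi> = {\<tau>\<in>Delta. Max (range (mixed_payoff \<phi> \<tau>)) \<le> 0}"

text \<open>The min/max over Delta are attained (compactness),
  so they coincide with Inf/Sup.\<close>
definition J :: "('x::finite \<Rightarrow> 'y::finite \<Rightarrow> real) \<Rightarrow> real set" where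
  "J \<phi> = {Inf ((\<lambda>\<tau>. Max (range (mixed_payoff \<phi> \<tau>))) ` Delta) ..
           Sup ((\<lambda>\<tau>. Min (range (mixed_payoff \<phi> \<tau>))) ` Delta)}"

end

theory Submission
  imports Defs
begin

lemma fin_range: "finite (range (f::'y::finite \<Rightarrow> real))" by simp

lemma Min_range_ge_iff: "(c \<le> Min (range (f::'y::finite \<Rightarrow> real))) \<longleftrightarrow> (\<forall>y. c \<le> f y)"
  by (simp add: Min_ge_iff)

lemma Max_range_le_iff: "(Max (range (f::'y::finite \<Rightarrow> real)) \<le> c) \<longleftrightarrow> (\<forall>y. f y \<le> c)"
  by (simp add: Max_le_iff)

lemma Min_range_attained: "\<exists>y. Min (range (f::'y::finite \<Rightarrow> real)) = f y"
proof -
  have "Min (range f) \<in> range f" by (rule Min_in) auto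
  then show ?thesis by (metis rangeE)
qed

lemma cont_Min_image:
  fixes f :: "'y \<Rightarrow> 'v::topological_space \<Rightarrow> real"
  assumes "finite Y" "Y \<noteq> {}" "\<And>y. y \<in> Y \<Longrightarrow> continuous_on S (f y)"
  shows "continuous_on S (\<lambda>v. Min ((\<lambda>y. f y v) ` Y))"
  using assms
proof (induction Y rule: finite_ne_induct)
  case (singleton x)
  then show ?case by simp
next
  case (insert x F)
  have "(\<lambda>v. Min ((\<lambda>y. f y v) ` insert x F)) = (\<lambda>v. min (f x v) (Min ((\<lambda>y. f y v) ` F)))"
    using insert by (simp add: Min_insert)
  then show ?case using insert by (auto intro!: continuous_on_min)
qed

definition Svec :: "(real^'x::finite) set" where
  "Svec = {v. (\<forall>i. 0 \<le> v$i) \<and> (\<Sum>i\<in>UNIV. v$i) = 1}"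

lemma Svec_compact: "compact (Svec :: (real^'x::finite) set)"
proof -
  have b: "Svec \<subseteq> cbox (0::real^'x) 1"
  proof
    fix v :: "real^'x" assume v: "v \<in> Svec"
    have "\<forall>i. v$i \<le> 1"
    proof
      fix i
      have "v$i \<le> (\<Sum>j\<in>UNIV. v$j)" using v by (intro member_le_sum) (auto simp: Svec_def)
      then show "v$i \<le> 1" using v by (simp add: Svec_def)
    qed
    then show "v \<in> cbox 0 1" using v by (simp add: Svec_def mem_box_cart)
  qed
  have c: "closed (Svec :: (real^'x) set)"
    unfolding Svec_def
    by (intro closed_Collect_conj closed_Collect_all closed_Collect_le closed_Collect_eq continuous_intros)
  show ?thesis using b c bounded_cbox bounded_subset compact_eq_bounded_closed by blast
qed

lemma Svec_ne: "(Svec :: (real^'x::finite) set) \<noteq> {}"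
proof -
  have "(\<chi> i. 1 / real CARD('x)) \<in> (Svec :: (real^'x) set)"
    by (simp add: Svec_def)
  then show ?thesis by blast
qed

lemma Delta_Svec: "\<tau> \<in> Delta \<longleftrightarrow> vec_lambda \<tau> \<in> Svec"
  by (simp add: Delta_def is_dist_def Svec_def)

lemma attain:
  fixes \<psi> :: "'x::finite \<Rightarrow> 'y::finite \<Rightarrow> real"
  shows "\<exists>\<tau>\<in>Delta. \<forall>\<tau>'\<in>Delta. Min (range (mixed_payoff \<psi> \<tau>')) \<le> Min (range (mixed_payoff \<psi> \<tau>))"
proof -
  let ?G = "\<lambda>v::real^'x. Min ((\<lambda>y. \<Sum>a\<in>UNIV. v$a * \<psi> a y) ` UNIV)"
  have "continuous_on Svec ?G"
    by (intro cont_Min_image continuous_intros) auto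
  then obtain v where v: "v \<in> Svec" "\<forall>w\<in>Svec. ?G w \<le> ?G v"
    using continuous_attains_sup[OF Svec_compact Svec_ne] by blast
  show ?thesis
  proof (intro bexI ballI)
    show "vec_nth v \<in> Delta" using v by (simp add: Delta_Svec)
    fix \<tau>' :: "'x \<Rightarrow> real" assume "\<tau>' \<in> Delta"
    then have "vec_lambda \<tau>' \<in> Svec" by (simp add: Delta_Svec)
    then have "?G (vec_lambda \<tau>') \<le> ?G v" using v by blast
    then show "Min (range (mixed_payoff \<psi> \<tau>')) \<le> Min (range (mixed_payoff \<psi> (vec_nth v)))"
      by (simp add: mixed_payoff_def)
  qed
qed

lemma mp_neg: "mixed_payoff (\<lambda>a b. - \<phi> a b) \<tau> y = - mixed_payoff \<phi> \<tau> y"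
  by (simp add: mixed_payoff_def sum_negf)

lemma Max_as_Min: "Max (range (mixed_payoff \<phi> \<tau>)) = - Min (range (mixed_payoff (\<lambda>a b. - \<phi> a b) (\<tau>::'x::finite \<Rightarrow> real) :: 'y::finite \<Rightarrow> real))"
proof -
  have "range (mixed_payoff (\<lambda>a b. - \<phi> a b) \<tau> :: 'y \<Rightarrow> real) = uminus ` range (mixed_payoff \<phi> \<tau>)"
    by (auto simp: mp_neg image_image)
  then show ?thesis by (simp add: image_image)
qed

lemma plus_iff: "\<tau> \<in> PhiX_plus \<phi> \<longleftrightarrow> \<tau> \<in> Delta \<and> (\<forall>y. 0 \<le> mixed_payoff \<phi> \<tau> y)"
  by (simp add: PhiX_plus_def Min_range_ge_iff)

lemma minus_iff: "\<tau> \<in> PhiX_minus \<phi> \<longleftrightarrow> \<tau> \<in> Delta \<and> (\<forall>y. mixed_payoff \<phi> \<tau> y \<le> 0)"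
  by (simp add: PhiX_minus_def Max_range_le_iff)

lemma minus_plus: "PhiX_minus \<phi> = PhiX_plus (\<lambda>a b. - \<phi> a b)"
  by (auto simp: minus_iff plus_iff mp_neg)

lemma part2:
  fixes \<phi> :: "'x::finite \<Rightarrow> 'y::finite \<Rightarrow> real"
  shows "(PhiX_plus \<phi> \<noteq> {} \<and> PhiX_minus \<phi> \<noteq> {} \<longleftrightarrow> 0 \<in> J \<phi>)"
proof -
  let ?F = "\<lambda>\<tau>. Min (range (mixed_payoff \<phi> \<tau>))"
  let ?G = "\<lambda>\<tau>. Max (range (mixed_payoff \<phi> \<tau>))"
  obtain t1 where t1: "t1 \<in> Delta" "\<forall>\<tau>\<in>Delta. ?F \<tau> \<le> ?F t1"
    using attain[of \<phi>] by blast
  obtain t2 where t2: "t2 \<in> Delta"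
    "\<forall>\<tau>\<in>Delta. Min (range (mixed_payoff (\<lambda>a b. - \<phi> a b) \<tau>)) \<le> Min (range (mixed_payoff (\<lambda>a b. - \<phi> a b) t2))"
    using attain[of "\<lambda>a b. - \<phi> a b"] by blast
  have t2': "\<forall>\<tau>\<in>Delta. ?G t2 \<le> ?G \<tau>" 
  proof
    fix \<tau> :: "'x \<Rightarrow> real" assume "\<tau> \<in> Delta"
    then have "Min (range (mixed_payoff (\<lambda>a b. - \<phi> a b) \<tau>)) \<le> Min (range (mixed_payoff (\<lambda>a b. - \<phi> a b) t2))"
      using t2(2) by blast
    then show "?G t2 \<le> ?G \<tau>" unfolding Max_as_Min[of \<phi> t2] Max_as_Min[of \<phi> \<tau>] by linarith
  qed
  have S: "Sup (?F ` Delta) = ?F t1"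
    by (rule cSup_eq_maximum) (use t1 in auto)
  have I: "Inf (?G ` Delta) = ?G t2"
    by (rule cInf_eq_minimum) (use t2 t2' in auto)
  have P: "PhiX_plus \<phi> \<noteq> {} \<longleftrightarrow> 0 \<le> ?F t1"
  proof
    assume "PhiX_plus \<phi> \<noteq> {}"
    then obtain \<tau> where "\<tau> \<in> Delta" "0 \<le> ?F \<tau>" unfolding PhiX_plus_def by blast
    moreover from this(1) have "?F \<tau> \<le> ?F t1" using t1(2) by blast
    ultimately show "0 \<le> ?F t1" by linarith
  next
    assume "0 \<le> ?F t1" then have "t1 \<in> PhiX_plus \<phi>" using t1 unfolding PhiX_plus_def by blast
    then show "PhiX_plus \<phi> \<noteq> {}" by blast
  qed
  have M: "PhiX_minus \<phi> \<noteq> {} \<longleftrightarrow> ?G t2 \<le> 0"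
  proof
    assume "PhiX_minus \<phi> \<noteq> {}"
    then obtain \<tau> where "\<tau> \<in> Delta" "?G \<tau> \<le> 0" unfolding PhiX_minus_def by blast
    moreover from this(1) have "?G t2 \<le> ?G \<tau>" using t2' by blast
    ultimately show "?G t2 \<le> 0" by linarith
  next
    assume "?G t2 \<le> 0" then have "t2 \<in> PhiX_minus \<phi>" using t2 unfolding PhiX_minus_def by blast
    then show "PhiX_minus \<phi> \<noteq> {}" by blast
  qed
  show ?thesis unfolding J_def S I P M by auto
qed

lemma fin_len: "finite {h::('a::finite) list. length h = t}"
  using finite_lists_length_eq[of "UNIV::'a set" t] by simp

lemma hist_prob_Nil: "hist_prob \<sigma>X \<sigma>Y [] = 1"
  by (simp add: hist_prob_def)

lemma hist_prob_snoc:
  "hist_prob \<sigma>X \<sigma>Y (h @ [(a,b)]) = hist_prob \<sigma>X \<sigma>Y h * (\<sigma>X h a * \<sigma>Y h b)"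
proof -
  have "hist_prob \<sigma>X \<sigma>Y (h @ [(a,b)]) =
     (\<Prod>i<Suc (length h). \<sigma>X (take i (h @ [(a,b)])) (fst ((h @ [(a,b)]) ! i)) * \<sigma>Y (take i (h @ [(a,b)])) (snd ((h @ [(a,b)]) ! i)))"
    by (simp add: hist_prob_def)
  also have "\<dots> = (\<Prod>i<length h. \<sigma>X (take i (h @ [(a,b)])) (fst ((h @ [(a,b)]) ! i)) * \<sigma>Y (take i (h @ [(a,b)])) (snd ((h @ [(a,b)]) ! i))) * (\<sigma>X h a * \<sigma>Y h b)"
    by (simp add: prod.lessThan_Suc)
  also have "(\<Prod>i<length h. \<sigma>X (take i (h @ [(a,b)])) (fst ((h @ [(a,b)]) ! i)) * \<sigma>Y (take i (h @ [(a,b)])) (snd ((h @ [(a,b)]) ! i))) = hist_prob \<sigma>X \<sigma>Y h"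
    unfolding hist_prob_def by (intro prod.cong) (auto simp: nth_append)
  finally show ?thesis .
qed

lemma hist_prob_nonneg:
  assumes "behavioral \<sigma>X" "behavioral \<sigma>Y"
  shows "0 \<le> hist_prob \<sigma>X \<sigma>Y h"
  using assms unfolding hist_prob_def behavioral_def is_dist_def
  by (intro prod_nonneg) auto

lemma sum_len_Suc:
  fixes F :: "('x::finite \<times> 'y::finite) list \<Rightarrow> real"
  shows "(\<Sum>h\<in>{h. length h = Suc t}. F h) = (\<Sum>h\<in>{h. length h = t}. \<Sum>a\<in>UNIV. \<Sum>b\<in>UNIV. F (h @ [(a,b)]))"
proof -
  have eq: "{h::('x \<times> 'y) list. length h = Suc t} = (\<lambda>(h,p). h @ [p]) ` ({h. length h = t} \<times> UNIV)"
  proof (rule set_eqI, rule iffI)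
    fix h :: "('x \<times> 'y) list" assume "h \<in> {h. length h = Suc t}"
    then have "h \<noteq> []" "length (butlast h) = t" by auto
    then have "h = (\<lambda>(h,p). h @ [p]) (butlast h, last h)" "(butlast h, last h) \<in> {h. length h = t} \<times> UNIV"
      by auto
    then show "h \<in> (\<lambda>(h,p). h @ [p]) ` ({h. length h = t} \<times> UNIV)" by blast
  qed auto
  have inj: "inj_on (\<lambda>(h,p). h @ [p]) ({h::('x \<times> 'y) list. length h = t} \<times> UNIV)"
    by (auto simp: inj_on_def)
  have "(\<Sum>h\<in>{h. length h = Suc t}. F h) = (\<Sum>(h,p)\<in>{h. length h = t} \<times> UNIV. F (h @ [p]))"
    unfolding eq by (subst sum.reindex[OF inj]) (simp add: case_prod_unfold)
  also have "\<dots> = (\<Sum>h\<in>{h. length h = t}. \<Sum>p\<in>UNIV. F (h @ [p]))"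
    by (rule sum.cartesian_product[symmetric])
  also have "\<dots> = (\<Sum>h\<in>{h. length h = t}. \<Sum>a\<in>UNIV. \<Sum>b\<in>UNIV. F (h @ [(a,b)]))"
  proof (rule sum.cong[OF refl])
    fix h :: "('x \<times> 'y) list"
    have "(\<Sum>p\<in>(UNIV::('x\<times>'y) set). F (h @ [p])) = (\<Sum>p\<in>UNIV \<times> UNIV. F (h @ [p]))"
      by (simp add: UNIV_Times_UNIV)
    also have "\<dots> = (\<Sum>a\<in>UNIV. \<Sum>b\<in>UNIV. F (h @ [(a,b)]))"
      by (simp add: sum.cartesian_product split_def)
    finally show "(\<Sum>p\<in>UNIV. F (h @ [p])) = (\<Sum>a\<in>UNIV. \<Sum>b\<in>UNIV. F (h @ [(a,b)]))" .
  qed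
  finally show ?thesis .
qed

lemma expect_Suc:
  fixes \<sigma>X :: "('x::finite, 'y::finite) history \<Rightarrow> 'x \<Rightarrow> real"
  shows "(\<Sum>h\<in>{h. length h = Suc t}. hist_prob \<sigma>X \<sigma>Y h * F h) =
    (\<Sum>h\<in>{h. length h = t}. hist_prob \<sigma>X \<sigma>Y h * (\<Sum>a\<in>UNIV. \<Sum>b\<in>UNIV. \<sigma>X h a * \<sigma>Y h b * F (h @ [(a,b)])))"
  unfolding sum_len_Suc hist_prob_snoc
  by (intro sum.cong refl) (simp add: sum_distrib_left mult_ac)

lemma sum_prob:
  fixes \<sigma>X :: "('x::finite, 'y::finite) history \<Rightarrow> 'x \<Rightarrow> real"
  assumes "behavioral \<sigma>X" "behavioral \<sigma>Y"
  shows "(\<Sum>h\<in>{h. length h = t}. hist_prob \<sigma>X \<sigma>Y h) = 1"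
proof (induction t)
  case 0
  have "{h::('x\<times>'y) list. length h = 0} = {[]}" by auto
  then show ?case by (simp add: hist_prob_Nil)
next
  case (Suc t)
  have "(\<Sum>h\<in>{h. length h = Suc t}. hist_prob \<sigma>X \<sigma>Y h * 1) =
    (\<Sum>h\<in>{h. length h = t}. hist_prob \<sigma>X \<sigma>Y h * (\<Sum>a\<in>UNIV. \<Sum>b\<in>UNIV. \<sigma>X h a * \<sigma>Y h b * 1))"
    by (rule expect_Suc)
  also have "\<dots> = (\<Sum>h\<in>{h. length h = t}. hist_prob \<sigma>X \<sigma>Y h)"
  proof (rule sum.cong[OF refl])
    fix h
    have "(\<Sum>a\<in>UNIV. \<Sum>b\<in>UNIV. \<sigma>X h a * \<sigma>Y h b * 1) = (\<Sum>a\<in>UNIV. \<sigma>X h a) * (\<Sum>b\<in>UNIV. \<sigma>Y h b)"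
      by (simp add: sum_product)
    also have "\<dots> = 1" using assms by (simp add: behavioral_def is_dist_def)
    finally show "hist_prob \<sigma>X \<sigma>Y h * (\<Sum>a\<in>UNIV. \<Sum>b\<in>UNIV. \<sigma>X h a * \<sigma>Y h b * 1) = hist_prob \<sigma>X \<sigma>Y h" by simp
  qed
  finally show ?case using Suc by simp
qed

lemma expect_le:
  fixes \<sigma>X :: "('x::finite, 'y::finite) history \<Rightarrow> 'x \<Rightarrow> real"
  assumes "behavioral \<sigma>X" "behavioral \<sigma>Y" "\<And>h. length h = t \<Longrightarrow> F h \<le> c"
  shows "(\<Sum>h\<in>{h. length h = t}. hist_prob \<sigma>X \<sigma>Y h * F h) \<le> c"
proof -
  have "(\<Sum>h\<in>{h. length h = t}. hist_prob \<sigma>X \<sigma>Y h * F h) \<le> (\<Sum>h\<in>{h. length h = t}. hist_prob \<sigma>X \<sigma>Y h * c)"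
    using assms hist_prob_nonneg by (intro sum_mono mult_left_mono) auto
  also have "\<dots> = c" using sum_prob[OF assms(1,2)] by (simp add: sum_distrib_right[symmetric])
  finally show ?thesis .
qed

lemma expect_ge:
  fixes \<sigma>X :: "('x::finite, 'y::finite) history \<Rightarrow> 'x \<Rightarrow> real"
  assumes "behavioral \<sigma>X" "behavioral \<sigma>Y" "\<And>h. length h = t \<Longrightarrow> c \<le> F h"
  shows "c \<le> (\<Sum>h\<in>{h. length h = t}. hist_prob \<sigma>X \<sigma>Y h * F h)"
proof -
  have "(\<Sum>h\<in>{h. length h = t}. hist_prob \<sigma>X \<sigma>Y h * c) \<le> (\<Sum>h\<in>{h. length h = t}. hist_prob \<sigma>X \<sigma>Y h * F h)"
    using assms hist_prob_nonneg by (intro sum_mono mult_left_mono) auto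
  moreover have "(\<Sum>h\<in>{h. length h = t}. hist_prob \<sigma>X \<sigma>Y h * c) = c" using sum_prob[OF assms(1,2)] by (simp add: sum_distrib_right[symmetric])
  ultimately show ?thesis by simp
qed

definition Bnd :: "('x::finite \<Rightarrow> 'y::finite \<Rightarrow> real) \<Rightarrow> real" where
  "Bnd \<phi> = (\<Sum>a\<in>UNIV. \<Sum>b\<in>UNIV. \<bar>\<phi> a b\<bar>)"

lemma dist_le1: "is_dist p \<Longrightarrow> p a \<le> 1"
proof -
  assume d: "is_dist p"
  have "p a \<le> (\<Sum>a\<in>UNIV. p a)" using d by (intro member_le_sum) (auto simp: is_dist_def)
  then show ?thesis using d by (simp add: is_dist_def)
qed

lemma inner_bound:
  assumes "is_dist p" "is_dist q"
  shows "\<bar>\<Sum>a\<in>UNIV. \<Sum>b\<in>UNIV. p a * q b * \<phi> a b\<bar> \<le> Bnd \<phi>"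
proof -
  have "\<bar>\<Sum>a\<in>UNIV. \<Sum>b\<in>UNIV. p a * q b * \<phi> a b\<bar> \<le> (\<Sum>a\<in>UNIV. \<bar>\<Sum>b\<in>UNIV. p a * q b * \<phi> a b\<bar>)"
    by (rule sum_abs)
  also have "\<dots> \<le> (\<Sum>a\<in>UNIV. \<Sum>b\<in>UNIV. \<bar>p a * q b * \<phi> a b\<bar>)"
    by (intro sum_mono sum_abs)
  also have "\<dots> \<le> (\<Sum>a\<in>UNIV. \<Sum>b\<in>UNIV. \<bar>\<phi> a b\<bar>)"
  proof (intro sum_mono)
    fix a b
    have "0 \<le> p a" "p a \<le> 1" "0 \<le> q b" "q b \<le> 1" using assms dist_le1 by (auto simp: is_dist_def)
    then have "p a * q b \<le> 1" "0 \<le> p a * q b" by (auto intro: mult_le_one)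
    then have "p a * q b * \<bar>\<phi> a b\<bar> \<le> 1 * \<bar>\<phi> a b\<bar>" by (intro mult_right_mono) auto
    then show "\<bar>p a * q b * \<phi> a b\<bar> \<le> \<bar>\<phi> a b\<bar>" using \<open>0 \<le> p a\<close> \<open>0 \<le> q b\<close> by (simp add: abs_mult)
  qed
  finally show ?thesis by (simp add: Bnd_def)
qed

lemma stage_bound:
  fixes \<sigma>X :: "('x::finite, 'y::finite) history \<Rightarrow> 'x \<Rightarrow> real"
  assumes "behavioral \<sigma>X" "behavioral \<sigma>Y"
  shows "\<bar>stage_exp \<sigma>X \<sigma>Y \<phi> t\<bar> \<le> Bnd \<phi>"
proof -
  have i: "\<And>h. \<bar>\<Sum>a\<in>UNIV. \<Sum>b\<in>UNIV. \<sigma>X h a * \<sigma>Y h b * \<phi> a b\<bar> \<le> Bnd \<phi>"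
    using assms by (intro inner_bound) (auto simp: behavioral_def)
  have i1: "\<And>h. (\<Sum>a\<in>UNIV. \<Sum>b\<in>UNIV. \<sigma>X h a * \<sigma>Y h b * \<phi> a b) \<le> Bnd \<phi>"
    using i by (meson abs_le_D1)
  have i2: "\<And>h. - Bnd \<phi> \<le> (\<Sum>a\<in>UNIV. \<Sum>b\<in>UNIV. \<sigma>X h a * \<sigma>Y h b * \<phi> a b)"
    using i by (meson abs_le_D2 minus_le_iff)
  have "stage_exp \<sigma>X \<sigma>Y \<phi> t \<le> Bnd \<phi>" unfolding stage_exp_def
    by (rule expect_le[OF assms i1])
  moreover have "- Bnd \<phi> \<le> stage_exp \<sigma>X \<sigma>Y \<phi> t" unfolding stage_exp_def
    by (rule expect_ge[OF assms i2])
  ultimately show ?thesis by linarith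
qed

lemma summable_stage:
  fixes \<sigma>X :: "('x::finite, 'y::finite) history \<Rightarrow> 'x \<Rightarrow> real"
  assumes "behavioral \<sigma>X" "behavioral \<sigma>Y" "0 \<le> lam" "lam < 1"
  shows "summable (\<lambda>t. lam ^ t * stage_exp \<sigma>X \<sigma>Y \<phi> t)"
proof (rule summable_comparison_test[where g = "\<lambda>t. Bnd \<phi> * lam ^ t"])
  show "\<exists>N. \<forall>n\<ge>N. norm (lam ^ n * stage_exp \<sigma>X \<sigma>Y \<phi> n) \<le> Bnd \<phi> * lam ^ n"
  proof (intro exI[of _ 0] allI impI)
    fix n :: nat
    have "lam ^ n * \<bar>stage_exp \<sigma>X \<sigma>Y \<phi> n\<bar> \<le> lam ^ n * Bnd \<phi>"
      using stage_bound[OF assms(1,2)] assms(3) by (intro mult_left_mono) auto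
    then show "norm (lam ^ n * stage_exp \<sigma>X \<sigma>Y \<phi> n) \<le> Bnd \<phi> * lam ^ n"
      using assms(3) by (simp add: abs_mult mult.commute)
  qed
  show "summable (\<lambda>t. Bnd \<phi> * lam ^ t)"
    using assms by (intro summable_mult summable_geometric) auto
qed

lemma stage_neg: "stage_exp \<sigma>X \<sigma>Y (\<lambda>a b. - \<phi> a b) t = - stage_exp \<sigma>X \<sigma>Y \<phi> t"
  by (simp add: stage_exp_def sum_negf)

lemma autocratic_neg:
  fixes \<sigma>X :: "('x::finite, 'y::finite) history \<Rightarrow> 'x \<Rightarrow> real"
  assumes "autocratic \<sigma>X \<phi> lam" "0 \<le> lam"
  shows "autocratic \<sigma>X (\<lambda>a b. - \<phi> a b) lam"
proof (cases "lam < 1")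
  case True
  have b: "behavioral \<sigma>X" using assms by (simp add: autocratic_def)
  have "\<forall>\<sigma>Y. behavioral \<sigma>Y \<longrightarrow> (1 - lam) * (\<Sum>t. lam ^ t * stage_exp \<sigma>X \<sigma>Y (\<lambda>a b. - \<phi> a b) t) = 0"
    unfolding stage_neg
  proof (intro allI impI)
    fix \<sigma>Y :: "('x, 'y) history \<Rightarrow> 'y \<Rightarrow> real" assume bY: "behavioral \<sigma>Y"
    have s: "summable (\<lambda>t. lam ^ t * stage_exp \<sigma>X \<sigma>Y \<phi> t)" by (rule summable_stage[OF b bY assms(2) True])
    have "(\<Sum>t. lam ^ t * - stage_exp \<sigma>X \<sigma>Y \<phi> t) = - (\<Sum>t. lam ^ t * stage_exp \<sigma>X \<sigma>Y \<phi> t)"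
      using suminf_minus[OF s] by simp
    moreover have "(1 - lam) * (\<Sum>t. lam ^ t * stage_exp \<sigma>X \<sigma>Y \<phi> t) = 0"
      using assms(1) True bY by (simp add: autocratic_def)
    ultimately show "(1 - lam) * (\<Sum>t. lam ^ t * - stage_exp \<sigma>X \<sigma>Y \<phi> t) = 0" by simp
  qed
  then show ?thesis using True b by (simp add: autocratic_def)
next
  case False
  then show ?thesis using assms(1) unfolding autocratic_def stage_neg
    by (auto simp: sum_negf intro: tendsto_minus_cancel_left[THEN iffD1])
qed

lemma necessity:
  fixes \<sigma>X :: "('x::finite, 'y::finite) history \<Rightarrow> 'x \<Rightarrow> real"
  assumes aut: "autocratic \<sigma>X \<phi> lam" and lam: "0 \<le> lam" "lam \<le> 1"
  shows "PhiX_plus \<phi> \<noteq> {}"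
proof (rule ccontr)
  assume emp: "\<not> PhiX_plus \<phi> \<noteq> {}"
  let ?F = "\<lambda>\<tau>. Min (range (mixed_payoff \<phi> \<tau>))"
  obtain t1 where t1: "t1 \<in> Delta" "\<forall>\<tau>\<in>Delta. ?F \<tau> \<le> ?F t1"
    using attain[of \<phi>] by blast
  have "t1 \<notin> PhiX_plus \<phi>" using emp by blast
  then have "\<not> (0 \<le> ?F t1)" unfolding PhiX_plus_def using t1(1) by blast
  then have neg: "?F t1 < 0" by linarith
  define c where "c = ?F t1"
  have bX: "behavioral \<sigma>X" using aut by (simp add: autocratic_def)
  have ex: "\<exists>y. mixed_payoff \<phi> (\<sigma>X h) y \<le> c" for h
  proof -
    have "\<sigma>X h \<in> Delta" using bX by (simp add: behavioral_def Delta_def)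
    then have "?F (\<sigma>X h) \<le> c" using t1 c_def by blast
    moreover obtain y where "?F (\<sigma>X h) = mixed_payoff \<phi> (\<sigma>X h) y" using Min_range_attained by blast
    ultimately show ?thesis by auto
  qed
  define yb where "yb h = (SOME y. mixed_payoff \<phi> (\<sigma>X h) y \<le> c)" for h
  have yb: "mixed_payoff \<phi> (\<sigma>X h) (yb h) \<le> c" for h
    unfolding yb_def using ex by (rule someI_ex)
  define \<sigma>Y :: "('x, 'y) history \<Rightarrow> 'y \<Rightarrow> real" where "\<sigma>Y h = (\<lambda>b. if b = yb h then 1 else 0)" for h
  have bY: "behavioral \<sigma>Y" by (simp add: behavioral_def is_dist_def \<sigma>Y_def)
  have inner: "(\<Sum>a\<in>UNIV. \<Sum>b\<in>UNIV. \<sigma>X h a * \<sigma>Y h b * \<phi> a b) = mixed_payoff \<phi> (\<sigma>X h) (yb h)" for h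
  proof -
    have "(\<Sum>b\<in>UNIV. \<sigma>X h a * \<sigma>Y h b * \<phi> a b) = \<sigma>X h a * \<phi> a (yb h)" for a
    proof -
      have "(\<Sum>b\<in>UNIV. \<sigma>X h a * \<sigma>Y h b * \<phi> a b) = (\<Sum>b\<in>UNIV. if b = yb h then \<sigma>X h a * \<phi> a b else 0)"
        by (intro sum.cong) (auto simp: \<sigma>Y_def)
      then show ?thesis by simp
    qed
    then show ?thesis by (simp add: mixed_payoff_def)
  qed
  have st: "stage_exp \<sigma>X \<sigma>Y \<phi> t \<le> c" for t
    unfolding stage_exp_def inner by (rule expect_le[OF bX bY yb])
  show False
  proof (cases "lam < 1")
    case True
    have z: "(1 - lam) * (\<Sum>t. lam ^ t * stage_exp \<sigma>X \<sigma>Y \<phi> t) = 0"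
      using aut True bY by (simp add: autocratic_def)
    have "(\<Sum>t. lam ^ t * stage_exp \<sigma>X \<sigma>Y \<phi> t) \<le> (\<Sum>t. c * lam ^ t)"
    proof (rule suminf_le)
      show "lam ^ n * stage_exp \<sigma>X \<sigma>Y \<phi> n \<le> c * lam ^ n" for n
      proof -
        have "lam ^ n * stage_exp \<sigma>X \<sigma>Y \<phi> n \<le> lam ^ n * c"
          using st[of n] lam by (intro mult_left_mono) auto
        then show ?thesis by (simp add: mult.commute)
      qed
      show "summable (\<lambda>t. lam ^ t * stage_exp \<sigma>X \<sigma>Y \<phi> t)" by (rule summable_stage[OF bX bY lam(1) True])
      show "summable (\<lambda>t. c * lam ^ t)" using lam True by (intro summable_mult summable_geometric) auto
    qed
    also have "\<dots> = c / (1 - lam)"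
      using lam True by (simp add: suminf_mult suminf_geometric)
    finally have "(1 - lam) * (\<Sum>t. lam ^ t * stage_exp \<sigma>X \<sigma>Y \<phi> t) \<le> (1 - lam) * (c / (1 - lam))"
      using True by (intro mult_left_mono) auto
    then have "0 \<le> c" using z True by simp
    then show False using neg c_def by linarith
  next
    case False
    then have lim: "(\<lambda>T. (\<Sum>t\<le>T. stage_exp \<sigma>X \<sigma>Y \<phi> t) / real (T + 1)) \<longlonglongrightarrow> 0"
      using aut bY by (simp add: autocratic_def)
    have "(\<Sum>t\<le>T. stage_exp \<sigma>X \<sigma>Y \<phi> t) / real (T + 1) \<le> c" for T
    proof -
      have "(\<Sum>t\<le>T. stage_exp \<sigma>X \<sigma>Y \<phi> t) \<le> (\<Sum>t\<le>T. c)" by (intro sum_mono st)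
      then have "(\<Sum>t\<le>T. stage_exp \<sigma>X \<sigma>Y \<phi> t) \<le> real (T + 1) * c" by simp
      then show ?thesis by (simp add: divide_le_eq mult.commute)
    qed
    then have "0 \<le> c" using LIMSEQ_le_const2[OF lim] by blast
    then show False using neg c_def by linarith
  qed
qed

lemma necessity2:
  fixes \<sigma>X :: "('x::finite, 'y::finite) history \<Rightarrow> 'x \<Rightarrow> real"
  assumes aut: "autocratic \<sigma>X \<phi> lam" and lam: "0 \<le> lam" "lam \<le> 1"
  shows "PhiX_minus \<phi> \<noteq> {}"
  unfolding minus_plus using necessity[OF autocratic_neg[OF aut lam(1)] lam] .

definition Wf :: "('x::finite \<Rightarrow> 'y::finite \<Rightarrow> real) \<Rightarrow> ('x \<Rightarrow> real) \<Rightarrow> ('x \<Rightarrow> real) \<Rightarrow> ('x, 'y) history \<Rightarrow> real" where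
  "Wf \<phi> tp tm h = foldl (\<lambda>w p. w + mixed_payoff \<phi> (if 0 \<le> w then tm else tp) (snd p)) 0 h"

definition sX :: "('x::finite \<Rightarrow> 'y::finite \<Rightarrow> real) \<Rightarrow> ('x \<Rightarrow> real) \<Rightarrow> ('x \<Rightarrow> real) \<Rightarrow> ('x, 'y) history \<Rightarrow> 'x \<Rightarrow> real" where
  "sX \<phi> tp tm h = (if 0 \<le> Wf \<phi> tp tm h then tm else tp)"

lemma Wf_Nil: "Wf \<phi> tp tm [] = 0" by (simp add: Wf_def)

lemma Wf_snoc: "Wf \<phi> tp tm (h @ [(a,b)]) = Wf \<phi> tp tm h + mixed_payoff \<phi> (sX \<phi> tp tm h) b"
  by (simp add: Wf_def sX_def)

lemma mp_bound:
  assumes "\<tau> \<in> Delta"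
  shows "\<bar>mixed_payoff \<phi> \<tau> y\<bar> \<le> Bnd \<phi>"
proof -
  have "\<bar>mixed_payoff \<phi> \<tau> y\<bar> \<le> (\<Sum>a\<in>UNIV. \<bar>\<tau> a * \<phi> a y\<bar>)"
    unfolding mixed_payoff_def by (rule sum_abs)
  also have "\<dots> \<le> (\<Sum>a\<in>UNIV. \<Sum>b\<in>UNIV. \<bar>\<phi> a b\<bar>)"
  proof (rule sum_mono)
    fix a
    have d: "is_dist \<tau>" using assms by (simp add: Delta_def)
    then have "0 \<le> \<tau> a" "\<tau> a \<le> 1" using dist_le1 by (auto simp: is_dist_def)
    then have "\<bar>\<tau> a * \<phi> a y\<bar> \<le> \<bar>\<phi> a y\<bar>"
      by (simp add: abs_mult mult_left_le_one_le)
    also have "\<dots> \<le> (\<Sum>b\<in>UNIV. \<bar>\<phi> a b\<bar>)" by (rule member_le_sum) auto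
    finally show "\<bar>\<tau> a * \<phi> a y\<bar> \<le> (\<Sum>b\<in>UNIV. \<bar>\<phi> a b\<bar>)" .
  qed
  finally show ?thesis by (simp add: Bnd_def)
qed

lemma Wf_bound:
  assumes p: "tp \<in> PhiX_plus \<phi>" and m: "tm \<in> PhiX_minus \<phi>"
  shows "\<bar>Wf \<phi> tp tm h\<bar> \<le> Bnd \<phi>"
proof (induction h rule: rev_induct)
  case Nil
  have "0 \<le> Bnd \<phi>" by (simp add: Bnd_def sum_nonneg)
  then show ?case by (simp add: Wf_Nil)
next
  case (snoc p h)
  obtain a b where pe: "p = (a,b)" by (cases p)
  have tpD: "tp \<in> Delta" "\<forall>y. 0 \<le> mixed_payoff \<phi> tp y" using p by (auto simp: plus_iff)
  have tmD: "tm \<in> Delta" "\<forall>y. mixed_payoff \<phi> tm y \<le> 0" using m by (auto simp: minus_iff)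
  have bp: "\<bar>mixed_payoff \<phi> tp b\<bar> \<le> Bnd \<phi>" using tpD mp_bound by blast
  have bm: "\<bar>mixed_payoff \<phi> tm b\<bar> \<le> Bnd \<phi>" using tmD mp_bound by blast
  show ?case
  proof (cases "0 \<le> Wf \<phi> tp tm h")
    case True
    then show ?thesis using snoc.IH bm tmD(2)[rule_format, of b]
      by (simp add: pe Wf_snoc sX_def abs_le_iff)
  next
    case False
    then show ?thesis using snoc.IH bp tpD(2)[rule_format, of b]
      by (simp add: pe Wf_snoc sX_def abs_le_iff)
  qed
qed

lemma inner1:
  assumes "is_dist p" "is_dist q"
  shows "(\<Sum>a\<in>UNIV. \<Sum>b\<in>UNIV. p a * q b * (w + mixed_payoff \<phi> p b)) = w + (\<Sum>b\<in>UNIV. q b * mixed_payoff \<phi> p b)"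
proof -
  have "(\<Sum>a\<in>UNIV. \<Sum>b\<in>UNIV. p a * q b * (w + mixed_payoff \<phi> p b)) =
     (\<Sum>a\<in>UNIV. p a * (w * (\<Sum>b\<in>UNIV. q b))) + (\<Sum>a\<in>UNIV. p a * (\<Sum>b\<in>UNIV. q b * mixed_payoff \<phi> p b))"
    by (simp add: distrib_left sum.distrib sum_distrib_left mult_ac)
  also have "\<dots> = w + (\<Sum>b\<in>UNIV. q b * mixed_payoff \<phi> p b)"
    using assms by (simp add: is_dist_def sum_distrib_right[symmetric])
  finally show ?thesis .
qed

lemma inner2:
  "(\<Sum>a\<in>UNIV. \<Sum>b\<in>UNIV. p a * q b * \<phi> a b) = (\<Sum>b\<in>UNIV. q b * mixed_payoff \<phi> p b)"
  unfolding mixed_payoff_def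
  by (subst sum.swap) (simp add: sum_distrib_left mult_ac)

lemma sufficiency:
  fixes \<phi> :: "'x::finite \<Rightarrow> 'y::finite \<Rightarrow> real"
  assumes p: "tp \<in> PhiX_plus \<phi>" and m: "tm \<in> PhiX_minus \<phi>"
  shows "autocratic (sX \<phi> tp tm :: ('x,'y) history \<Rightarrow> 'x \<Rightarrow> real) \<phi> 1"
proof -
  let ?X = "sX \<phi> tp tm :: ('x,'y) history \<Rightarrow> 'x \<Rightarrow> real"
  have tpD: "is_dist tp" using p by (auto simp: plus_iff Delta_def)
  have tmD: "is_dist tm" using m by (auto simp: minus_iff Delta_def)
  have bX: "behavioral ?X" using tpD tmD by (simp add: behavioral_def sX_def)
  have "(\<lambda>T. (\<Sum>t\<le>T. stage_exp ?X \<sigma>Y \<phi> t) / real (T + 1)) \<longlonglongrightarrow> 0" if bY: "behavioral \<sigma>Y" for \<sigma>Y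
  proof -
    define E where "E t = (\<Sum>h\<in>{h. length h = t}. hist_prob ?X \<sigma>Y h * Wf \<phi> tp tm h)" for t
    have ES: "E (Suc t) = E t + stage_exp ?X \<sigma>Y \<phi> t" for t
    proof -
      have "E (Suc t) = (\<Sum>h\<in>{h. length h = t}. hist_prob ?X \<sigma>Y h *
          (\<Sum>a\<in>UNIV. \<Sum>b\<in>UNIV. ?X h a * \<sigma>Y h b * Wf \<phi> tp tm (h @ [(a,b)])))"
        unfolding E_def by (rule expect_Suc)
      also have "\<dots> = (\<Sum>h\<in>{h. length h = t}. hist_prob ?X \<sigma>Y h *
          (Wf \<phi> tp tm h + (\<Sum>a\<in>UNIV. \<Sum>b\<in>UNIV. ?X h a * \<sigma>Y h b * \<phi> a b)))"
      proof (intro sum.cong refl)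
        fix h :: "('x,'y) history"
        have d1: "is_dist (?X h)" "is_dist (\<sigma>Y h)" using bX bY by (auto simp: behavioral_def)
        show "hist_prob ?X \<sigma>Y h * (\<Sum>a\<in>UNIV. \<Sum>b\<in>UNIV. ?X h a * \<sigma>Y h b * Wf \<phi> tp tm (h @ [(a,b)])) =
          hist_prob ?X \<sigma>Y h * (Wf \<phi> tp tm h + (\<Sum>a\<in>UNIV. \<Sum>b\<in>UNIV. ?X h a * \<sigma>Y h b * \<phi> a b))"
          unfolding Wf_snoc inner1[OF d1] inner2 ..
      qed
      also have "\<dots> = E t + stage_exp ?X \<sigma>Y \<phi> t"
        unfolding E_def stage_exp_def by (simp add: distrib_left sum.distrib)
      finally show ?thesis .
    qed
    have E0: "E 0 = 0"
    proof -
      have "{h::('x\<times>'y) list. length h = 0} = {[]}" by auto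
      then show ?thesis by (simp add: E_def Wf_Nil)
    qed
    have sumE: "(\<Sum>t\<le>T. stage_exp ?X \<sigma>Y \<phi> t) = E (Suc T)" for T
      by (induction T) (simp_all add: ES E0)
    have Eb: "\<bar>E t\<bar> \<le> Bnd \<phi>" for t
    proof -
      have "E t \<le> Bnd \<phi>" unfolding E_def
        using Wf_bound[OF p m] by (intro expect_le[OF bX bY]) (meson abs_le_D1)
      moreover have "- Bnd \<phi> \<le> E t" unfolding E_def
        using Wf_bound[OF p m] by (intro expect_ge[OF bX bY]) (meson abs_le_D2 minus_le_iff)
      ultimately show ?thesis by linarith
    qed
    have g: "(\<lambda>T. Bnd \<phi> * inverse (real (Suc T))) \<longlonglongrightarrow> 0"
      by (intro tendsto_mult_right_zero LIMSEQ_inverse_real_of_nat)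
    show ?thesis
    proof (rule Lim_null_comparison[OF _ g])
      show "\<forall>\<^sub>F T in sequentially. norm ((\<Sum>t\<le>T. stage_exp ?X \<sigma>Y \<phi> t) / real (T + 1)) \<le> Bnd \<phi> * inverse (real (Suc T))"
      proof (intro always_eventually allI)
        fix T
        show "norm ((\<Sum>t\<le>T. stage_exp ?X \<sigma>Y \<phi> t) / real (T + 1)) \<le> Bnd \<phi> * inverse (real (Suc T))"
          unfolding sumE using Eb[of "Suc T"]
          by (simp add: divide_inverse abs_mult mult_right_mono)
      qed
    qed
  qed
  then show ?thesis using bX by (simp add: autocratic_def)
qed

theorem corollary3:
  fixes \<phi> :: "'x::finite \<Rightarrow> 'y::finite \<Rightarrow> real"
  shows "(enforceable \<phi> \<longleftrightarrow> PhiX_plus \<phi> \<noteq> {} \<and> PhiX_minus \<phi> \<noteq> {})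
       \<and> (PhiX_plus \<phi> \<noteq> {} \<and> PhiX_minus \<phi> \<noteq> {} \<longleftrightarrow> 0 \<in> J \<phi>)"
proof (intro conjI)
  show "PhiX_plus \<phi> \<noteq> {} \<and> PhiX_minus \<phi> \<noteq> {} \<longleftrightarrow> 0 \<in> J \<phi>" by (rule part2)
  show "enforceable \<phi> \<longleftrightarrow> PhiX_plus \<phi> \<noteq> {} \<and> PhiX_minus \<phi> \<noteq> {}"
  proof
    assume "enforceable \<phi>"
    then obtain lam and \<sigma>X :: "('x, 'y) history \<Rightarrow> 'x \<Rightarrow> real"
      where l: "lam \<in> {0..1}" and a: "autocratic \<sigma>X \<phi> lam"
      unfolding enforceable_def by blast
    show "PhiX_plus \<phi> \<noteq> {} \<and> PhiX_minus \<phi> \<noteq> {}"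
      using necessity[OF a] necessity2[OF a] l by auto
  next
    assume "PhiX_plus \<phi> \<noteq> {} \<and> PhiX_minus \<phi> \<noteq> {}"
    then obtain tp tm where "tp \<in> PhiX_plus \<phi>" "tm \<in> PhiX_minus \<phi>" by blast
    then have "autocratic (sX \<phi> tp tm :: ('x,'y) history \<Rightarrow> 'x \<Rightarrow> real) \<phi> 1" by (rule sufficiency)
    then show "enforceable \<phi>" unfolding enforceable_def by force
  qed
qed

end
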